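(* Let $w:\{0,1\}^L\to\mathbb{R}_{\ge 0}$ be a generic fitness landscape inducing the standard staircase triangulation. (i) If the zero-string $0\cdots0$ is a local fitness minimum (all its Hamming neighbours have higher fitness), then it is the global minimum and every edge of the fitness graph is directed toward the endpoint with more $1$'s. (ii) If at most one of the $L$ Hamming neighbours of the zero-string has lower fitness than the zero-string, then the landscape has exactly one peak, and this peak is at Hamming distance at most $1$ from the one-string $1\cdots1$.
   Context: Genotypes are elements of $\{0,1\}^L$, identified with vertices of $[0,1]^L$. The triangulation induced by $w$ is the regular subdivision of $[0,1]^L$ obtained by projecting the upper faces of $\mathrm{conv}\{(g,w_g)\}\subset\mathbb{R}^{L+1}$; $w$ is generic if all $w_g$ are distinct and this subdivision is a triangulation. The fitness graph directs each cube edge toward the genotype of higher fitness; a peak is a genotype all of whose Hamming neighbours have strictly lower fitness. The standard staircase triangulation consists of the $L!$ simplices formed by the genotypes along a walk from $0\cdots0$ to $1\cdots1$ in which each step changes one $0$ into a $1$. *)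

theory Defs
  imports Complex_Main
begin

text \<open>Genotypes in {0,1}^L are encoded as subsets g of {..<L} (the set of loci
carrying a 1); the zero-string is {} and the one-string is {..<L}.
A fitness landscape is w :: nat set => real (only values on the cube matter).\<close>

definition cube :: "nat \<Rightarrow> nat set set" where
  "cube L = Pow {..<L}"

text \<open>Affine function on R^L evaluated at the 0/1 vertex g: c + sum_{i in g} a_i.\<close>
definition aff_val :: "(nat \<Rightarrow> real) \<Rightarrow> real \<Rightarrow> nat set \<Rightarrow> real" where
  "aff_val a c g = c + (\<Sum>i\<in>g. a i)"

text \<open>S is the vertex set of an upper face of conv{(g,w g)}: some affine function
lies weakly above all lifted points, touching exactly those of S.\<close>
definition upper_cell :: "nat \<Rightarrow> (nat set \<Rightarrow> real) \<Rightarrow> nat set set \<Rightarrow> bool" where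
  "upper_cell L w S \<longleftrightarrow> S \<subseteq> cube L \<and>
     (\<exists>a c. \<forall>g\<in>cube L. (g \<in> S \<longrightarrow> aff_val a c g = w g) \<and>
                          (g \<notin> S \<longrightarrow> aff_val a c g > w g))"

definition max_cell :: "nat \<Rightarrow> (nat set \<Rightarrow> real) \<Rightarrow> nat set set \<Rightarrow> bool" where
  "max_cell L w S \<longleftrightarrow> upper_cell L w S \<and> \<not> (\<exists>T. upper_cell L w T \<and> S \<subset> T)"

definition aff_indep :: "nat \<Rightarrow> nat set set \<Rightarrow> bool" where
  "aff_indep L S \<longleftrightarrow> (\<forall>lam :: nat set \<Rightarrow> real.
      (\<Sum>g\<in>S. lam g) = 0 \<and> (\<forall>i<L. (\<Sum>g\<in>S. if i \<in> g then lam g else 0) = 0)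
      \<longrightarrow> (\<forall>g\<in>S. lam g = 0))"

definition generic :: "nat \<Rightarrow> (nat set \<Rightarrow> real) \<Rightarrow> bool" where
  "generic L w \<longleftrightarrow> inj_on w (cube L) \<and> (\<forall>S. upper_cell L w S \<longrightarrow> aff_indep L S)"

definition staircase_simplex :: "nat \<Rightarrow> nat set set \<Rightarrow> bool" where
  "staircase_simplex L S \<longleftrightarrow> (\<exists>f :: nat \<Rightarrow> nat set. f 0 = {} \<and> f L = {..<L} \<and>
      (\<forall>k<L. \<exists>i. i \<notin> f k \<and> f (Suc k) = insert i (f k)) \<and> S = f ` {..L})"

definition induces_staircase :: "nat \<Rightarrow> (nat set \<Rightarrow> real) \<Rightarrow> bool" where
  "induces_staircase L w \<longleftrightarrow> {S. max_cell L w S} = {S. staircase_simplex L S}"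

definition hamming_nb :: "nat set \<Rightarrow> nat set \<Rightarrow> bool" where
  "hamming_nb g h \<longleftrightarrow> card ((g - h) \<union> (h - g)) = 1"

definition is_peak :: "nat \<Rightarrow> (nat set \<Rightarrow> real) \<Rightarrow> nat set \<Rightarrow> bool" where
  "is_peak L w g \<longleftrightarrow> g \<in> cube L \<and> (\<forall>h\<in>cube L. hamming_nb g h \<longrightarrow> w h < w g)"

end

theory Submission
  imports Defs
begin

lemma supermod:
  assumes stair: "induces_staircase L w"
    and g: "g \<subseteq> {..<L}" and i: "i < L" and j: "j < L"
    and ig: "i \<notin> g" and jg: "j \<notin> g" and ij: "i \<noteq> j"
  shows "w (insert i g) + w (insert j g) < w g + w (insert i (insert j g))"
proof -
  have fg: "finite g" using g finite_subset by blast
  define xs where "xs = sorted_list_of_set g @ [i,j] @ sorted_list_of_set ({..<L} - g - {i,j})"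
  have dxs: "distinct xs" unfolding xs_def using fg ig jg ij by auto
  have sxs: "set xs = {..<L}" unfolding xs_def using fg g i j by auto
  have lxs: "length xs = L" using distinct_card[OF dxs] sxs by simp
  define f where "f k = set (take k xs)" for k
  have cf: "card (f k) = k" if "k \<le> L" for k
    unfolding f_def using distinct_card[OF distinct_take[OF dxs]] that lxs by simp
  define m where "m = card g"
  have lsg: "length (sorted_list_of_set g) = m" using m_def fg by simp
  have f0: "f m = g" unfolding f_def xs_def using lsg fg by simp
  have f1: "f (m+1) = insert i g" unfolding f_def xs_def using lsg fg
    by (simp add: take_append)
  have f2: "f (m+2) = insert i (insert j g)" unfolding f_def xs_def using lsg fg
    by (auto simp add: take_append)
  have "card (insert i (insert j g)) \<le> L"
    using card_mono[of "{..<L}" "insert i (insert j g)"] g i j by auto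
  hence mL: "m + 2 \<le> L" using fg ig jg ij m_def by simp
  have stp: "\<forall>k<L. \<exists>a. a \<notin> f k \<and> f (Suc k) = insert a (f k)"
  proof (intro allI impI)
    fix k assume k: "k < L"
    have t: "take (Suc k) xs = take k xs @ [xs ! k]" using k lxs take_Suc_conv_app_nth by auto
    have "distinct (take (Suc k) xs)" using dxs by simp
    hence "xs ! k \<notin> f k" unfolding f_def using t by simp
    moreover have "f (Suc k) = insert (xs ! k) (f k)" unfolding f_def using t by auto
    ultimately show "\<exists>a. a \<notin> f k \<and> f (Suc k) = insert a (f k)" by blast
  qed
  define S where "S = f ` {..L}"
  have fz: "f 0 = {}" by (simp add: f_def)
  have fL: "f L = {..<L}" using sxs lxs by (simp add: f_def)
  have ss: "staircase_simplex L S" unfolding staircase_simplex_def S_def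
    using fz fL stp by blast
  hence "max_cell L w S" using stair unfolding induces_staircase_def by blast
  hence "upper_cell L w S" unfolding max_cell_def by blast
  then obtain a c where ac: "\<forall>h\<in>cube L. (h \<in> S \<longrightarrow> aff_val a c h = w h) \<and>
                          (h \<notin> S \<longrightarrow> aff_val a c h > w h)"
    unfolding upper_cell_def by blast
  have inS1: "g \<in> S" unfolding S_def using f0 mL by (intro image_eqI[where x=m]) auto
  have inS2: "insert i g \<in> S" unfolding S_def using f1 mL by (intro image_eqI[where x="m+1"]) auto
  have inS3: "insert i (insert j g) \<in> S" unfolding S_def using f2 mL by (intro image_eqI[where x="m+2"]) auto
  note inS = inS1 inS2 inS3
  have notS: "insert j g \<notin> S"
  proof
    assume "insert j g \<in> S"
    then obtain k where k: "k \<le> L" "insert j g = f k" unfolding S_def by auto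
    have c1: "card (insert j g) = m+1" using fg jg m_def by simp
    hence "k = m + 1" using cf[OF k(1)] k(2) by simp
    hence "insert j g = insert i g" using k f1 by simp
    hence "j \<in> insert i g" by (metis insertI1)
    thus False using ij jg by simp
  qed
  have cu: "g \<in> cube L" "insert i g \<in> cube L" "insert j g \<in> cube L" "insert i (insert j g) \<in> cube L"
    unfolding cube_def using g i j by auto
  have e: "aff_val a c g + aff_val a c (insert i (insert j g)) = aff_val a c (insert i g) + aff_val a c (insert j g)"
    unfolding aff_val_def using fg ig jg ij by simp
  have v1: "aff_val a c g = w g" using ac cu(1) inS1 by blast
  have v2: "aff_val a c (insert i g) = w (insert i g)" using ac cu(2) inS2 by blast
  have v3: "aff_val a c (insert i (insert j g)) = w (insert i (insert j g))" using ac cu(4) inS3 by blast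
  have v4: "aff_val a c (insert j g) > w (insert j g)" using ac cu(3) notS by blast
  show ?thesis using v1 v2 v3 v4 e by linarith
qed

lemma marg:
  assumes stair: "induces_staircase L w" and fg: "finite g"
  shows "g \<subseteq> {..<L} \<Longrightarrow> i < L \<Longrightarrow> i \<notin> g \<Longrightarrow>
     w {i} - w {} \<le> w (insert i g) - w g \<and> (g \<noteq> {} \<longrightarrow> w {i} - w {} < w (insert i g) - w g)"
  using fg
proof (induction g rule: finite_induct)
  case empty
  then show ?case by simp
next
  case (insert j F)
  have F: "F \<subseteq> {..<L}" "j < L" "i \<notin> F" "i \<noteq> j" "j \<notin> F" "i < L"
    using insert.prems insert.hyps by auto
  have sm: "w (insert i F) + w (insert j F) < w F + w (insert i (insert j F))"
    using supermod[OF stair F(1) F(6) F(2) F(3) F(5) F(4)] .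
  have ih: "w {i} - w {} \<le> w (insert i F) - w F" using insert.IH F by blast
  have "w {i} - w {} < w (insert i (insert j F)) - w (insert j F)" using sm ih by linarith
  then show ?case by linarith
qed

lemma hn_cases:
  assumes "hamming_nb g h"
  shows "(\<exists>x. x \<notin> g \<and> h = insert x g) \<or> (\<exists>x. x \<notin> h \<and> g = insert x h)"
proof -
  have "card ((g - h) \<union> (h - g)) = 1" using assms unfolding hamming_nb_def by assumption
  then obtain x where x: "(g - h) \<union> (h - g) = {x}" by (rule card_1_singletonE)
  have mem: "y = x" if "y \<in> (g - h) \<union> (h - g)" for y
    using that x by (metis singletonD)
  have xin: "x \<in> (g - h) \<union> (h - g)" using x by (metis singletonI)
  show ?thesis
  proof (cases "x \<in> g")
    case True
    hence xh: "x \<notin> h" using xin by blast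
    have "g = insert x h"
    proof (intro equalityI subsetI)
      fix y assume "y \<in> g" thus "y \<in> insert x h" using mem by blast
    next
      fix y assume "y \<in> insert x h" thus "y \<in> g" using mem True by blast
    qed
    thus ?thesis using xh by blast
  next
    case False
    hence xg: "x \<notin> g" by simp
    hence xh: "x \<in> h" using xin by blast
    have "h = insert x g"
    proof (intro equalityI subsetI)
      fix y assume "y \<in> h" thus "y \<in> insert x g" using mem by blast
    next
      fix y assume "y \<in> insert x g" thus "y \<in> h" using mem xh by blast
    qed
    thus ?thesis using xg by blast
  qed
qed

lemma hn_insert: "x \<notin> g \<Longrightarrow> hamming_nb g (insert x g)"
  unfolding hamming_nb_def
proof -
  assume "x \<notin> g"
  hence "(g - insert x g) \<union> (insert x g - g) = {x}" by blast
  thus "card ((g - insert x g) \<union> (insert x g - g)) = 1" by simp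
qed

lemma hn_sym: "hamming_nb g h \<Longrightarrow> hamming_nb h g"
  unfolding hamming_nb_def by (simp add: Un_commute)

lemma hn_single: "hamming_nb {} {i}"
  unfolding hamming_nb_def by simp

lemma fin_cube: "finite (cube L)" unfolding cube_def by simp

theorem mainTheorem10:
  fixes L :: nat and w :: "nat set \<Rightarrow> real"
  assumes nonneg: "\<forall>g\<in>cube L. w g \<ge> 0"
    and gen: "generic L w"
    and stair: "induces_staircase L w"
  shows "((\<forall>h\<in>cube L. hamming_nb {} h \<longrightarrow> w {} < w h) \<longrightarrow>
            (\<forall>g\<in>cube L. g \<noteq> {} \<longrightarrow> w {} < w g) \<and>
            (\<forall>g\<in>cube L. \<forall>h\<in>cube L. hamming_nb g h \<and> card g < card h \<longrightarrow> w g < w h))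
       \<and> (card {h\<in>cube L. hamming_nb {} h \<and> w h < w {}} \<le> 1 \<longrightarrow>
            (\<exists>!g. is_peak L w g) \<and> (\<forall>g. is_peak L w g \<longrightarrow> card ({..<L} - g) \<le> 1))"
proof (intro conjI impI)
  assume H: "\<forall>h\<in>cube L. hamming_nb {} h \<longrightarrow> w {} < w h"
  have single: "w {} < w {i}" if "i < L" for i
  proof -
    have "{i} \<in> cube L" by (simp add: cube_def that)
    thus ?thesis using H hn_single[of i] by blast
  qed
  have pos: "w g < w (insert i g)" if "g \<subseteq> {..<L}" "i < L" "i \<notin> g" for g i
  proof -
    have "finite g" using that(1) finite_subset by blast
    hence "w {i} - w {} \<le> w (insert i g) - w g" using marg[OF stair, of g i] that by blast
    thus ?thesis using single[OF that(2)] by linarith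
  qed
  have gm: "finite g \<Longrightarrow> g \<subseteq> {..<L} \<Longrightarrow> g \<noteq> {} \<longrightarrow> w {} < w g" for g
  proof (induction g rule: finite_induct)
    case empty
    then show ?case by simp
  next
    case (insert x F)
    have x: "x < L" "F \<subseteq> {..<L}" using insert.prems by auto
    show ?case
    proof (cases "F = {}")
      case True
      then show ?thesis using single[OF x(1)] by simp
    next
      case False
      hence "w {} < w F" using insert.IH x(2) by blast
      moreover have "w F < w (insert x F)" using pos[OF x(2) x(1) insert.hyps(2)] .
      ultimately show ?thesis by simp
    qed
  qed
  show "\<forall>g\<in>cube L. g \<noteq> {} \<longrightarrow> w {} < w g"
  proof (intro ballI impI)
    fix g assume g: "g \<in> cube L" "g \<noteq> {}"
    hence gs: "g \<subseteq> {..<L}" by (simp add: cube_def)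
    hence "finite g" by (rule finite_subset) simp
    thus "w {} < w g" using gm gs g(2) by blast
  qed
  show "\<forall>g\<in>cube L. \<forall>h\<in>cube L. hamming_nb g h \<and> card g < card h \<longrightarrow> w g < w h"
  proof (intro ballI impI)
    fix g h assume gh: "g \<in> cube L" "h \<in> cube L" "hamming_nb g h \<and> card g < card h"
    have fh: "finite h" "finite g" using gh unfolding cube_def by (auto intro: finite_subset)
    have hc: "(\<exists>x. x \<notin> g \<and> h = insert x g) \<or> (\<exists>x. x \<notin> h \<and> g = insert x h)"
      using hn_cases gh(3) by blast
    show "w g < w h"
    proof (cases "\<exists>x. x \<notin> g \<and> h = insert x g")
      case True
      then obtain x where x: "x \<notin> g" "h = insert x g" by blast
      thus ?thesis using pos[of g x] gh unfolding cube_def by auto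
    next
      case False
      then obtain x where x: "x \<notin> h" "g = insert x h" using hc by blast
      thus ?thesis using gh fh by auto
    qed
  qed
next
  assume C: "card {h\<in>cube L. hamming_nb {} h \<and> w h < w {}} \<le> 1"
  let ?B = "{h\<in>cube L. hamming_nb {} h \<and> w h < w {}}"
  have fB: "finite ?B" using fin_cube by simp
  have badu: "j = k" if "j < L" "k < L" "w {j} < w {}" "w {k} < w {}" for j k
  proof -
    have "{j} \<in> ?B" "{k} \<in> ?B" using that hn_single unfolding cube_def by auto
    hence "{j} = {k}" using C card_le_Suc0_iff_eq[OF fB] by auto
    thus ?thesis by simp
  qed
  have inj: "inj_on w (cube L)" using gen unfolding generic_def by blast
  have goodpos: "w {} < w {j}" if "j < L" "\<not> w {j} < w {}" for j
  proof -
    have "w {j} \<noteq> w {}" using inj that(1) unfolding cube_def inj_on_def by blast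
    thus ?thesis using that by auto
  qed
  have peakbad: "w {j} < w {}" if p: "is_peak L w g" and j: "j < L" "j \<notin> g" for g j
  proof (rule ccontr)
    assume n: "\<not> w {j} < w {}"
    have g: "g \<subseteq> {..<L}" using p unfolding is_peak_def cube_def by auto
    hence "finite g" using finite_subset by blast
    hence "w g < w (insert j g)" using marg[OF stair, of g j] g j goodpos[OF j(1) n] by auto
    moreover have "insert j g \<in> cube L" using g j unfolding cube_def by auto
    ultimately show False using p hn_insert[OF j(2)] unfolding is_peak_def by force
  qed
  show "\<forall>g. is_peak L w g \<longrightarrow> card ({..<L} - g) \<le> 1"
  proof (intro allI impI)
    fix g assume p: "is_peak L w g"
    have "\<forall>x\<in>{..<L} - g. \<forall>y\<in>{..<L} - g. x = y"
    proof (intro ballI)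
      fix x y assume x: "x \<in> {..<L} - g" and y: "y \<in> {..<L} - g"
      have "x < L" "x \<notin> g" "y < L" "y \<notin> g" using x y by auto
      thus "x = y" using peakbad[OF p] badu by blast
    qed
    thus "card ({..<L} - g) \<le> 1"
      using card_le_Suc0_iff_eq[of "{..<L} - g"] by simp
  qed
  show "\<exists>!g. is_peak L w g"
  proof -
    have ne: "w ` cube L \<noteq> {}" unfolding cube_def by auto
    have "Max (w ` cube L) \<in> w ` cube L" using Max_in[OF finite_imageI[OF fin_cube] ne] .
    then obtain g where g: "g \<in> cube L" "w g = Max (w ` cube L)" by auto
    have "is_peak L w g" unfolding is_peak_def
    proof (intro conjI ballI impI)
      show "g \<in> cube L" by fact
      fix h assume h: "h \<in> cube L" "hamming_nb g h"
      have "h \<noteq> g" using h(2) unfolding hamming_nb_def by auto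
      hence "w h \<noteq> w g" using inj h(1) g(1) unfolding inj_on_def by blast
      moreover have "w h \<le> w g" using g(2) Max_ge[OF finite_imageI[OF fin_cube]] h(1) by auto
      ultimately show "w h < w g" by simp
    qed
    moreover have "g1 = g2" if p1: "is_peak L w g1" and p2: "is_peak L w g2" for g1 g2
    proof (rule ccontr)
      assume ne: "g1 \<noteq> g2"
      have s: "g1 \<subseteq> {..<L}" "g2 \<subseteq> {..<L}" "g1 \<in> cube L" "g2 \<in> cube L"
        using p1 p2 unfolding is_peak_def cube_def by auto
      let ?D = "(g1 - g2) \<union> (g2 - g1)"
      have fD: "finite ?D" using s finite_subset by blast
      have Dne: "?D \<noteq> {}" using ne by blast
      have allbad: "x < L \<and> w {x} < w {}" if "x \<in> ?D" for x
        using that s peakbad[OF p1] peakbad[OF p2] by blast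
      have "\<forall>x\<in>?D. \<forall>y\<in>?D. x = y"
      proof (intro ballI)
        fix x y assume "x \<in> ?D" "y \<in> ?D"
        hence "x < L \<and> w {x} < w {}" "y < L \<and> w {y} < w {}" using allbad by blast+
        thus "x = y" using badu by blast
      qed
      hence "card ?D \<le> 1" using card_le_Suc0_iff_eq[OF fD] by simp
      moreover have "card ?D \<noteq> 0" using fD Dne by simp
      ultimately have "hamming_nb g1 g2" unfolding hamming_nb_def by simp
      hence h2: "hamming_nb g2 g1" by (rule hn_sym)
      have "w g2 < w g1" using p1 s(4) \<open>hamming_nb g1 g2\<close> unfolding is_peak_def by blast
      moreover have "w g1 < w g2" using p2 s(3) h2 unfolding is_peak_def by blast
      ultimately show False by simp
    qed
    ultimately show ?thesis by blast
  qed
qed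

end
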